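(* Let $N\ge1$, $s\in(0,1)$. For $\lambda>-1$ let $$\mathcal L_\lambda(u)=\frac12\int_{\mathbb{R}^N}\big(|(-\Delta)^{s/2}u|^2+(\lambda+1)u^2\big)dx-\frac12\int_{\mathbb{R}^N}u^2\log u^2\,dx,\qquad \mathcal C_\lambda=\inf_{\varphi\in H^s(\mathbb{R}^N)\setminus\{0\}}\max_{t>0}\mathcal L_\lambda(t\varphi),$$ the least energy level of $(-\Delta)^s u+\lambda u=u\log|u|^2$ in $\mathbb{R}^N$. Then the map $\lambda\mapsto\mathcal C_\lambda$ from $(-1,+\infty)$ to $(0,+\infty)$ is continuous and increasing.
   Context: $\int|(-\Delta)^{s/2}u|^2:=\iint_{\mathbb{R}^{2N}}\frac{|u(x)-u(y)|^2}{|x-y|^{N+2s}}dxdy$; $(-\Delta)^s u(x)=2\,\mathrm{P.V.}\int\frac{u(x)-u(y)}{|x-y|^{N+2s}}dy$. It is used (from the literature) that $\mathcal C_\lambda>0$ and is attained by a least energy solution $U_\lambda$ with $\mathcal L_\lambda(U_\lambda)=\mathcal C_\lambda$. *)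

theory Defs
  imports "HOL-Analysis.Analysis"
begin

(* Gagliardo seminorm squared: \<integral>|(-\<Delta>)^{s/2}u|^2 := \<integral>\<integral> |u x - u y|^2 / |x-y|^(N+2s) dx dy,
   with N = DIM('a). *)
definition gagliardo :: "real \<Rightarrow> ('a::euclidean_space \<Rightarrow> real) \<Rightarrow> ennreal" where
  "gagliardo s u = (\<integral>\<^sup>+ x. (\<integral>\<^sup>+ y. ennreal ((u x - u y)^2 / norm (x - y) powr (real DIM('a) + 2 * s)) \<partial>lebesgue) \<partial>lebesgue)"

(* fractional Sobolev space H^s(R^N) (as a set of representatives) *)
definition Hs :: "real \<Rightarrow> ('a::euclidean_space \<Rightarrow> real) set" where
  "Hs s = {u. u \<in> borel_measurable lebesgue \<and>
              (\<integral>\<^sup>+ x. ennreal ((u x)^2) \<partial>lebesgue) < \<infinity> \<and> gagliardo s u < \<infinity>}"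

(* energy functional L_lam, with values in the extended reals; the log-term
   \<integral> u^2 log u^2 is split into its positive and negative parts *)
definition Lfun :: "real \<Rightarrow> real \<Rightarrow> ('a::euclidean_space \<Rightarrow> real) \<Rightarrow> ereal" where
  "Lfun s lam u =
     ereal (1/2) * (enn2ereal (gagliardo s u)
        + ereal (lam + 1) * enn2ereal (\<integral>\<^sup>+ x. ennreal ((u x)^2) \<partial>lebesgue))
     + ereal (1/2) * enn2ereal (\<integral>\<^sup>+ x. ennreal (- ((u x)^2 * ln ((u x)^2))) \<partial>lebesgue)
     - ereal (1/2) * enn2ereal (\<integral>\<^sup>+ x. ennreal ((u x)^2 * ln ((u x)^2)) \<partial>lebesgue)"

definition Clev :: "'a::euclidean_space itself \<Rightarrow> real \<Rightarrow> real \<Rightarrow> ereal" where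
  "Clev _ s lam = (INF \<phi> \<in> {\<phi> \<in> (Hs s :: ('a \<Rightarrow> real) set). \<not> (AE x in lebesgue. \<phi> x = 0)}.
                      SUP t \<in> {0<..}. Lfun s lam (\<lambda>x. t * \<phi> x))"

end

theory Submission
  imports Defs
begin

lemma emeasure_lebesgue_ball:
  fixes c :: "'a::euclidean_space"
  assumes "r \<ge> 0"
  shows "emeasure lebesgue (ball c r) = ennreal (unit_ball_vol (DIM('a)) * r ^ DIM('a))"
  using emeasure_ball[OF assms, of c] by (simp add: emeasure_completion main_part_sets)

definition gx :: "real \<Rightarrow> ('a::euclidean_space \<Rightarrow> real) \<Rightarrow> 'a \<Rightarrow> ennreal" where
  "gx s u x = (\<integral>\<^sup>+ y. ennreal ((u x - u y)^2 / norm (x - y) powr (real DIM('a) + 2 * s)) \<partial>lebesgue)"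

lemma gagliardo_gx: "gagliardo s u = (\<integral>\<^sup>+ x. gx s u x \<partial>lebesgue)"
  unfolding gagliardo_def gx_def by simp

lemma id_leb_borel: "(\<lambda>x. x) \<in> (lebesgue :: 'a::euclidean_space measure) \<rightarrow>\<^sub>M borel"
  by (rule measurable_completion) (simp add: measurable_ident_sets)

lemma ennreal_aux: "a \<ge> 0 \<Longrightarrow> b \<ge> 0 \<Longrightarrow> c \<ge> 0 \<Longrightarrow>
  ennreal (2 * (a * b) + 2 * c) = 2 * ennreal a * ennreal b + 2 * ennreal c"
proof -
  assume h: "a \<ge> 0" "b \<ge> 0" "c \<ge> 0"
  have "ennreal (2 * (a * b) + 2 * c) = ennreal (2 * (a * b)) + ennreal (2 * c)"
    using h by (intro ennreal_plus) auto
  also have "ennreal (2 * (a * b)) = ennreal 2 * (ennreal a * ennreal b)"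
    using h by (simp add: ennreal_mult)
  also have "ennreal (2 * c) = ennreal 2 * ennreal c"
    using h by (simp add: ennreal_mult)
  finally show ?thesis by (simp add: mult.assoc)
qed

lemma lemA:
  fixes u :: "'a::euclidean_space \<Rightarrow> real"
  assumes u: "u \<in> borel_measurable lebesgue" and r: "r > 0" and s: "s > 0"
  shows "ennreal (unit_ball_vol (DIM('a)) * r ^ DIM('a) * (u x)^2)
     \<le> 2 * ennreal (r powr (real DIM('a) + 2 * s)) * gx s u x + 2 * (\<integral>\<^sup>+ y. ennreal ((u y)^2) \<partial>lebesgue)"
proof -
  let ?p = "real DIM('a) + 2 * s"
  have "ennreal (unit_ball_vol (DIM('a)) * r ^ DIM('a) * (u x)^2)
      = ennreal ((u x)^2) * emeasure lebesgue (ball x r)"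
    using r by (simp add: emeasure_lebesgue_ball emeasure_ball ennreal_mult' mult.commute mult.assoc)
  also have "\<dots> = (\<integral>\<^sup>+ y. ennreal ((u x)^2) * indicator (ball x r) y \<partial>lebesgue)"
    by (simp add: nn_integral_cmult_indicator)
  also have "\<dots> \<le> (\<integral>\<^sup>+ y. 2 * ennreal (r powr ?p) * ennreal ((u x - u y)^2 / norm (x - y) powr ?p) + 2 * ennreal ((u y)^2) \<partial>lebesgue)"
  proof (rule nn_integral_mono)
    fix y
    show "ennreal ((u x)\<^sup>2) * indicator (ball x r) y
         \<le> 2 * ennreal (r powr ?p) * ennreal ((u x - u y)\<^sup>2 / norm (x - y) powr ?p) + 2 * ennreal ((u y)\<^sup>2)"
    proof (cases "y \<in> ball x r")
      case True
      have d: "(u x - u y)^2 \<le> r powr ?p * ((u x - u y)\<^sup>2 / norm (x - y) powr ?p)"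
      proof (cases "x = y")
        case True then show ?thesis by simp
      next
        case False
        then have np: "norm (x - y) > 0" by simp
        have "norm (x - y) powr ?p \<le> r powr ?p"
          using True s by (intro powr_mono2) (auto simp: dist_norm less_imp_le)
        then have "(u x - u y)^2 * norm (x - y) powr ?p \<le> (u x - u y)^2 * r powr ?p"
          by (intro mult_left_mono) auto
        then show ?thesis using np by (simp add: field_simps)
      qed
      have "(u x)^2 \<le> 2 * (u x - u y)^2 + 2 * (u y)^2"
        using zero_le_power2[of "u x - 2 * u y"] by (simp add: power2_eq_square algebra_simps)
      also have "\<dots> \<le> 2 * (r powr ?p * ((u x - u y)\<^sup>2 / norm (x - y) powr ?p)) + 2 * (u y)^2"
        using d by simp
      finally have "ennreal ((u x)^2) \<le> ennreal (2 * (r powr ?p * ((u x - u y)\<^sup>2 / norm (x - y) powr ?p)) + 2 * (u y)^2)"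
        by (rule ennreal_leI)
      also have "\<dots> = 2 * ennreal (r powr ?p) * ennreal ((u x - u y)\<^sup>2 / norm (x - y) powr ?p) + 2 * ennreal ((u y)\<^sup>2)"
        by (rule ennreal_aux) (simp_all add: divide_nonneg_nonneg)
      finally show ?thesis using True by simp
    qed simp
  qed
  also have "\<dots> = 2 * ennreal (r powr ?p) * gx s u x + 2 * (\<integral>\<^sup>+ y. ennreal ((u y)^2) \<partial>lebesgue)"
  proof -
    have m1: "(\<lambda>y. ennreal ((u x - u y)\<^sup>2 / norm (x - y) powr ?p)) \<in> borel_measurable lebesgue"
      using u id_leb_borel by measurable
    have m2: "(\<lambda>y. ennreal ((u y)\<^sup>2)) \<in> borel_measurable lebesgue"
      using u by measurable
    have "(\<integral>\<^sup>+ y. 2 * ennreal (r powr ?p) * ennreal ((u x - u y)^2 / norm (x - y) powr ?p) + 2 * ennreal ((u y)^2) \<partial>lebesgue)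
       = (\<integral>\<^sup>+ y. 2 * ennreal (r powr ?p) * ennreal ((u x - u y)^2 / norm (x - y) powr ?p) \<partial>lebesgue) + (\<integral>\<^sup>+ y. 2 * ennreal ((u y)^2) \<partial>lebesgue)"
      using m1 m2 by (intro nn_integral_add) auto
    also have "(\<integral>\<^sup>+ y. 2 * ennreal (r powr ?p) * ennreal ((u x - u y)^2 / norm (x - y) powr ?p) \<partial>lebesgue) = 2 * ennreal (r powr ?p) * gx s u x"
      unfolding gx_def using m1 by (rule nn_integral_cmult)
    also have "(\<integral>\<^sup>+ y. 2 * ennreal ((u y)^2) \<partial>lebesgue) = 2 * (\<integral>\<^sup>+ y. ennreal ((u y)^2) \<partial>lebesgue)"
      using m2 by (rule nn_integral_cmult)
    finally show ?thesis .
  qed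
  finally show ?thesis .
qed

lemma ln_bound_pow:
  fixes c0 th z :: real
  assumes "c0 > 0" "th > 0" "z > 0"
  shows "ln z \<le> c0 * z powr th + (- (1 + ln (c0 * th)) / th)"
proof -
  have pos: "c0 * th * z powr th > 0" using assms by simp
  have "ln (c0 * th * z powr th) \<le> c0 * th * z powr th - 1"
    using ln_le_minus_one pos by blast
  moreover have "ln (c0 * th * z powr th) = ln (c0 * th) + th * ln z"
    using assms by (simp add: ln_mult ln_powr)
  moreover have "th * (c0 * z powr th + (- (1 + ln (c0 * th)) / th)) = c0 * th * z powr th - 1 - ln (c0 * th)"
    using assms by (simp add: field_simps)
  ultimately have "th * ln z \<le> th * (c0 * z powr th + (- (1 + ln (c0 * th)) / th))"
    by linarith
  then show ?thesis using assms by simp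
qed

lemma lemB:
  fixes n :: nat and om s B y G :: real
  assumes n: "n > 0" and om: "om > 0" and s: "s > 0" and B: "B > 0" and y: "y \<ge> 0" and G: "G \<ge> 0"
    and H: "\<And>r. r > 0 \<Longrightarrow> om * r ^ n * y \<le> 2 * r powr (real n + 2 * s) * G + 2 * B"
  shows "y * ln y \<le> G + y * (ln B + (- (1 + ln ((om / 4) powr (1 + 2 * s / n) * (2 * s / n))) / (2 * s / n)))"
proof (cases "y = 0")
  case True then show ?thesis using G by simp
next
  case False
  then have yp: "y > 0" using y by simp
  define th where "th = 2 * s / n"
  define c0 where "c0 = (om / 4) powr (1 + th)"
  define z where "z = y / B"
  have thp: "th > 0" using s n by (simp add: th_def)
  have c0p: "c0 > 0" using om by (simp add: c0_def)
  have zp: "z > 0" using yp B by (simp add: z_def)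
  have yz: "y = z * B" using B by (simp add: z_def)
  define a where "a = 4 / (om * z)"
  have ap: "a > 0" using om zp by (simp add: a_def)
  define r where "r = a powr (1 / n)"
  have rp: "r > 0" using ap by (simp add: r_def)
  have rn: "r ^ n = a"
    using ap n by (simp add: r_def powr_realpow[symmetric] powr_powr)
  have rp2: "r powr (real n + 2 * s) = a * a powr th"
    using ap n rp by (simp add: powr_add r_def powr_powr th_def powr_realpow[symmetric] field_simps)
  have "om * a * y = 4 * B" using om zp B by (simp add: a_def yz field_simps)
  with H[OF rp] rn rp2 have "4 * B \<le> 2 * (a * a powr th) * G + 2 * B" by simp
  then have "B \<le> (a * a powr th) * G" by simp
  then have "B * (om * z / 4) powr (1 + th) \<le> (a * a powr th) * G * (om * z / 4) powr (1 + th)"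
    by (intro mult_right_mono) auto
  also have "\<dots> = ((a * a powr th) * (om * z / 4) powr (1 + th)) * G" by simp
  also have "(a * a powr th) * (om * z / 4) powr (1 + th) = 1"
  proof -
    have "a * a powr th = a powr (1 + th)" using ap by (simp add: powr_add)
    moreover have "a powr (1 + th) * (om * z / 4) powr (1 + th) = (a * (om * z / 4)) powr (1 + th)"
      using ap om zp by (subst powr_mult) auto
    moreover have "a * (om * z / 4) = 1" using om zp by (simp add: a_def)
    ultimately show ?thesis by simp
  qed
  finally have G1: "B * (om * z / 4) powr (1 + th) \<le> G" by simp
  have "(om * z / 4) powr (1 + th) = c0 * (z * z powr th)"
    using om zp by (simp add: c0_def powr_add powr_mult[symmetric] mult.commute mult.left_commute)
  with G1 have G2: "B * c0 * (z * z powr th) \<le> G" by (simp add: mult.assoc)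
  have L: "ln z \<le> c0 * z powr th + (- (1 + ln (c0 * th)) / th)"
    by (rule ln_bound_pow[OF c0p thp zp])
  have "y * ln y = y * ln B + (z * B) * ln z" using zp B by (simp add: yz ln_mult algebra_simps)
  also have "(z * B) * ln z \<le> (z * B) * (c0 * z powr th + (- (1 + ln (c0 * th)) / th))"
    using L zp B by (intro mult_left_mono) auto
  also have "(z * B) * (c0 * z powr th + (- (1 + ln (c0 * th)) / th)) = B * c0 * (z * z powr th) + y * (- (1 + ln (c0 * th)) / th)"
    by (simp add: yz algebra_simps)
  finally have "y * ln y \<le> G + y * (ln B + (- (1 + ln (c0 * th)) / th))" using G2 by (simp add: algebra_simps)
  then show ?thesis by (simp add: c0_def th_def)
qed
lemma sigma_finite_lebesgue: "sigma_finite_measure (lebesgue :: 'a::euclidean_space measure)"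
proof -
  obtain A :: "'a set set" where A: "countable A" "A \<subseteq> sets lborel" "\<Union>A = space lborel" "\<forall>a\<in>A. emeasure lborel a \<noteq> \<infinity>"
    using sigma_finite_measure.sigma_finite_countable[OF sigma_finite_lborel] by blast
  show ?thesis
    unfolding sigma_finite_measure_def
    apply (rule exI[of _ A])
    using A by (auto simp: emeasure_completion)
qed


lemma fst_leb: "fst \<in> borel_measurable ((lebesgue :: 'a::euclidean_space measure) \<Otimes>\<^sub>M (lebesgue :: 'a measure))"
  using measurable_compose[OF measurable_fst[of "lebesgue::'a measure" "lebesgue::'a measure"] id_leb_borel] by simp
lemma snd_leb: "snd \<in> borel_measurable ((lebesgue :: 'a::euclidean_space measure) \<Otimes>\<^sub>M (lebesgue :: 'a measure))"
  using measurable_compose[OF measurable_snd[of "lebesgue::'a measure" "lebesgue::'a measure"] id_leb_borel] by simp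

lemma ratio_meas:
  fixes u :: "'a::euclidean_space \<Rightarrow> real"
  assumes u: "u \<in> borel_measurable lebesgue"
  shows "(\<lambda>(x, y). ennreal ((u x - u y)^2 / norm (x - y) powr p)) \<in> borel_measurable (lebesgue \<Otimes>\<^sub>M lebesgue)"
proof -
  have u1: "(\<lambda>z. u (fst z)) \<in> borel_measurable (lebesgue \<Otimes>\<^sub>M (lebesgue :: 'a measure))"
    using measurable_compose[OF measurable_fst[of "lebesgue::'a measure" "lebesgue::'a measure"] u] by (simp add: comp_def)
  have u2: "(\<lambda>z. u (snd z)) \<in> borel_measurable ((lebesgue :: 'a measure) \<Otimes>\<^sub>M lebesgue)"
    using measurable_compose[OF measurable_snd[of "lebesgue::'a measure" "lebesgue::'a measure"] u] by (simp add: comp_def)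
  have d: "(\<lambda>z. norm (fst z - snd z)) \<in> borel_measurable (lebesgue \<Otimes>\<^sub>M (lebesgue :: 'a measure))"
    using fst_leb snd_leb by measurable
  have "(\<lambda>z. ennreal ((u (fst z) - u (snd z))^2 / norm (fst z - snd z) powr p)) \<in> borel_measurable (lebesgue \<Otimes>\<^sub>M lebesgue)"
    using u1 u2 d by measurable
  then show ?thesis by (simp add: case_prod_beta')
qed

lemma gx_meas:
  fixes u :: "'a::euclidean_space \<Rightarrow> real"
  assumes u: "u \<in> borel_measurable lebesgue"
  shows "gx s u \<in> borel_measurable lebesgue"
  unfolding gx_def
  by (rule sigma_finite_measure.borel_measurable_nn_integral[OF sigma_finite_lebesgue ratio_meas[OF u]])

definition KK :: "real \<Rightarrow> nat \<Rightarrow> real" where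
  "KK s n = (- (1 + ln ((unit_ball_vol (real n) / 4) powr (1 + 2 * s / n) * (2 * s / n))) / (2 * s / n))"

lemma ennreal_pos_part: "ennreal x = ennreal (max 0 x)"
  by (cases "x \<ge> 0") (auto simp: ennreal_neg)

lemma lemC_pt:
  fixes u :: "'a::euclidean_space \<Rightarrow> real"
  assumes u: "u \<in> borel_measurable lebesgue" and s: "s > 0"
    and BB: "(\<integral>\<^sup>+ y. ennreal ((u y)^2) \<partial>lebesgue) = ennreal B" and B: "B > 0"
  shows "ennreal ((u x)^2 * ln ((u x)^2)) + ennreal ((u x)^2 * max 0 (- (ln B + KK s DIM('a))))
     \<le> gx s u x + ennreal ((u x)^2 * max 0 (ln B + KK s DIM('a))) + ennreal (- ((u x)^2 * ln ((u x)^2)))"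
proof (cases "gx s u x = \<infinity>")
  case True then show ?thesis by simp
next
  case False
  then obtain G where G: "gx s u x = ennreal G" "G \<ge> 0"
    by (cases "gx s u x") auto
  let ?L = "ln B + KK s DIM('a)"
  let ?y = "(u x)^2"
  let ?om = "unit_ball_vol (real DIM('a))"
  have om: "?om > 0" by simp
  have H: "?om * r ^ DIM('a) * ?y \<le> 2 * r powr (real DIM('a) + 2 * s) * G + 2 * B" if r: "r > 0" for r
  proof -
    have "ennreal (?om * r ^ DIM('a) * ?y) \<le> 2 * ennreal (r powr (real DIM('a) + 2 * s)) * ennreal G + 2 * ennreal B"
      using lemA[OF u r s, of x] G BB by simp
    also have "\<dots> = ennreal (2 * r powr (real DIM('a) + 2 * s) * G + 2 * B)"
      using G B r by (simp add: ennreal_plus ennreal_mult mult.assoc)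
    finally show ?thesis using G B r by (subst (asm) ennreal_le_iff) auto
  qed
  have f: "?y * ln ?y \<le> G + ?y * ?L"
    using lemB[OF _ om s B _ G(2) H] unfolding KK_def by simp
  have real: "max 0 (?y * ln ?y) + ?y * max 0 (- ?L) \<le> G + ?y * max 0 ?L + max 0 (- (?y * ln ?y))"
  proof -
    have "?y * ?L = ?y * max 0 ?L - ?y * max 0 (- ?L)" by (simp add: max_def algebra_simps)
    with f show ?thesis by (simp add: max_def)
  qed
  have "ennreal ((u x)^2 * ln ((u x)^2)) + ennreal ((u x)^2 * max 0 (- ?L))
      = ennreal (max 0 (?y * ln ?y) + ?y * max 0 (- ?L))"
    by (subst ennreal_pos_part) (simp add: ennreal_plus)
  also have "\<dots> \<le> ennreal (G + ?y * max 0 ?L + max 0 (- (?y * ln ?y)))"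
    using real by (rule ennreal_leI)
  also have "\<dots> = gx s u x + ennreal ((u x)^2 * max 0 ?L) + ennreal (- ((u x)^2 * ln ((u x)^2)))"
    using G by (subst (2) ennreal_pos_part) (simp add: ennreal_plus)
  finally show ?thesis .
qed

lemma nn_int_sq_mult:
  fixes u :: "'a::euclidean_space \<Rightarrow> real"
  assumes u: "u \<in> borel_measurable lebesgue" and c: "c \<ge> 0"
    and BB: "(\<integral>\<^sup>+ y. ennreal ((u y)^2) \<partial>lebesgue) = ennreal B" and B: "B \<ge> 0"
  shows "(\<integral>\<^sup>+ x. ennreal ((u x)^2 * c) \<partial>lebesgue) = ennreal (B * c)"
proof -
  have "(\<integral>\<^sup>+ x. ennreal ((u x)^2 * c) \<partial>lebesgue) = (\<integral>\<^sup>+ x. ennreal ((u x)^2) * ennreal c \<partial>lebesgue)"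
    using c by (intro nn_integral_cong) (simp add: ennreal_mult)
  also have "\<dots> = (\<integral>\<^sup>+ x. ennreal ((u x)^2) \<partial>lebesgue) * ennreal c"
    using u by (intro nn_integral_multc) measurable
  finally show ?thesis using BB B c by (simp add: ennreal_mult)
qed

lemma lemC:
  fixes u :: "'a::euclidean_space \<Rightarrow> real"
  assumes u: "u \<in> borel_measurable lebesgue" and s: "s > 0"
    and BB: "(\<integral>\<^sup>+ y. ennreal ((u y)^2) \<partial>lebesgue) = ennreal B" and B: "B > 0"
  shows "(\<integral>\<^sup>+ x. ennreal ((u x)^2 * ln ((u x)^2)) \<partial>lebesgue) + ennreal (B * max 0 (- (ln B + KK s DIM('a))))
     \<le> gagliardo s u + ennreal (B * max 0 (ln B + KK s DIM('a))) + (\<integral>\<^sup>+ x. ennreal (- ((u x)^2 * ln ((u x)^2))) \<partial>lebesgue)"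
proof -
  let ?L = "ln B + KK s DIM('a)"
  have mf: "(\<lambda>x. ennreal ((u x)^2 * ln ((u x)^2))) \<in> borel_measurable lebesgue" using u by measurable
  have mf2: "(\<lambda>x. ennreal (- ((u x)^2 * ln ((u x)^2)))) \<in> borel_measurable lebesgue" using u by measurable
  have my1: "(\<lambda>x. ennreal ((u x)^2 * max 0 (- ?L))) \<in> borel_measurable lebesgue" using u by measurable
  have my2: "(\<lambda>x. ennreal ((u x)^2 * max 0 ?L)) \<in> borel_measurable lebesgue" using u by measurable
  have mg: "gx s u \<in> borel_measurable lebesgue" by (rule gx_meas[OF u])
  have "(\<integral>\<^sup>+ x. ennreal ((u x)^2 * ln ((u x)^2)) \<partial>lebesgue) + ennreal (B * max 0 (- ?L))
      = (\<integral>\<^sup>+ x. ennreal ((u x)^2 * ln ((u x)^2)) + ennreal ((u x)^2 * max 0 (- ?L)) \<partial>lebesgue)"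
    using mf my1 nn_int_sq_mult[OF u _ BB] B by (subst nn_integral_add) auto
  also have "\<dots> \<le> (\<integral>\<^sup>+ x. gx s u x + ennreal ((u x)^2 * max 0 ?L) + ennreal (- ((u x)^2 * ln ((u x)^2))) \<partial>lebesgue)"
    by (intro nn_integral_mono lemC_pt[OF u s BB B])
  also have "\<dots> = gagliardo s u + ennreal (B * max 0 ?L) + (\<integral>\<^sup>+ x. ennreal (- ((u x)^2 * ln ((u x)^2))) \<partial>lebesgue)"
    using mf2 my2 mg nn_int_sq_mult[OF u _ BB] B
    by (simp add: nn_integral_add gagliardo_gx)
  finally show ?thesis .
qed

lemma gx_scale:
  fixes u :: "'a::euclidean_space \<Rightarrow> real"
  assumes u: "u \<in> borel_measurable lebesgue"
  shows "gx s (\<lambda>x. t * u x) x = ennreal (t^2) * gx s u x"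
proof -
  let ?p = "real DIM('a) + 2 * s"
  have m1: "(\<lambda>y. ennreal ((u x - u y)\<^sup>2 / norm (x - y) powr ?p)) \<in> borel_measurable lebesgue"
    using u id_leb_borel by measurable
  have "gx s (\<lambda>x. t * u x) x = (\<integral>\<^sup>+ y. ennreal (t^2) * ennreal ((u x - u y)\<^sup>2 / norm (x - y) powr ?p) \<partial>lebesgue)"
    unfolding gx_def
    by (intro nn_integral_cong) (simp add: ennreal_mult[symmetric] power_mult_distrib right_diff_distrib[symmetric])
  also have "\<dots> = ennreal (t^2) * gx s u x"
    unfolding gx_def using m1 by (rule nn_integral_cmult)
  finally show ?thesis .
qed

lemma gag_scale:
  fixes u :: "'a::euclidean_space \<Rightarrow> real"
  assumes u: "u \<in> borel_measurable lebesgue"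
  shows "gagliardo s (\<lambda>x. t * u x) = ennreal (t^2) * gagliardo s u"
  unfolding gagliardo_gx gx_scale[OF u]
  using gx_meas[OF u] by (rule nn_integral_cmult)

lemma sq_scale:
  fixes u :: "'a::euclidean_space \<Rightarrow> real"
  assumes u: "u \<in> borel_measurable lebesgue"
  shows "(\<integral>\<^sup>+ x. ennreal ((t * u x)^2) \<partial>lebesgue) = ennreal (t^2) * (\<integral>\<^sup>+ x. ennreal ((u x)^2) \<partial>lebesgue)"
proof -
  have "(\<integral>\<^sup>+ x. ennreal ((t * u x)^2) \<partial>lebesgue) = (\<integral>\<^sup>+ x. ennreal (t^2) * ennreal ((u x)^2) \<partial>lebesgue)"
    by (intro nn_integral_cong) (simp add: ennreal_mult[symmetric] power_mult_distrib)
  also have "\<dots> = ennreal (t^2) * (\<integral>\<^sup>+ x. ennreal ((u x)^2) \<partial>lebesgue)"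
    using u by (intro nn_integral_cmult) measurable
  finally show ?thesis .
qed

lemma ennreal_abs_split: "ennreal \<bar>x\<bar> = ennreal x + ennreal (- x)"
  by (cases "x \<ge> 0") (auto simp: ennreal_neg)

lemma integrable_split:
  fixes f :: "'a::euclidean_space \<Rightarrow> real"
  assumes f: "f \<in> borel_measurable lebesgue"
    and P: "(\<integral>\<^sup>+ x. ennreal (f x) \<partial>lebesgue) < \<infinity>" and N: "(\<integral>\<^sup>+ x. ennreal (- f x) \<partial>lebesgue) < \<infinity>"
  shows "integrable lebesgue f"
proof (rule integrableI_bounded[OF f])
  have "(\<integral>\<^sup>+ x. ennreal (norm (f x)) \<partial>lebesgue) = (\<integral>\<^sup>+ x. ennreal (f x) + ennreal (- f x) \<partial>lebesgue)"
    by (simp add: ennreal_abs_split)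
  also have "\<dots> = (\<integral>\<^sup>+ x. ennreal (f x) \<partial>lebesgue) + (\<integral>\<^sup>+ x. ennreal (- f x) \<partial>lebesgue)"
  proof (rule nn_integral_add)
    show "(\<lambda>x. ennreal (f x)) \<in> borel_measurable lebesgue" using f by measurable
    have "(\<lambda>x. - f x) \<in> borel_measurable lebesgue" using f by (rule borel_measurable_uminus)
    then show "(\<lambda>x. ennreal (- f x)) \<in> borel_measurable lebesgue" by measurable
  qed
  finally show "(\<integral>\<^sup>+ x. ennreal (norm (f x)) \<partial>lebesgue) < \<infinity>" using P N by simp
qed

lemma integrable_parts_finite:
  fixes f :: "'a::euclidean_space \<Rightarrow> real"
  assumes "integrable lebesgue f"
  shows "(\<integral>\<^sup>+ x. ennreal (f x) \<partial>lebesgue) < \<infinity>" "(\<integral>\<^sup>+ x. ennreal (- f x) \<partial>lebesgue) < \<infinity>"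
proof -
  have b: "(\<integral>\<^sup>+ x. ennreal (norm (f x)) \<partial>lebesgue) < \<infinity>" using assms by (simp add: integrable_iff_bounded)
  have "(\<integral>\<^sup>+ x. ennreal (f x) \<partial>lebesgue) \<le> (\<integral>\<^sup>+ x. ennreal (norm (f x)) \<partial>lebesgue)"
    by (intro nn_integral_mono ennreal_leI) simp
  then show "(\<integral>\<^sup>+ x. ennreal (f x) \<partial>lebesgue) < \<infinity>" using b by (simp add: le_less_trans)
  have "(\<integral>\<^sup>+ x. ennreal (- f x) \<partial>lebesgue) \<le> (\<integral>\<^sup>+ x. ennreal (norm (f x)) \<partial>lebesgue)"
    by (intro nn_integral_mono ennreal_leI) simp
  then show "(\<integral>\<^sup>+ x. ennreal (- f x) \<partial>lebesgue) < \<infinity>" using b by (simp add: le_less_trans)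
qed

lemma Lfun_explicit:
  fixes \<phi> :: "'a::euclidean_space \<Rightarrow> real"
  assumes \<phi>: "\<phi> \<in> borel_measurable lebesgue"
    and GG: "gagliardo s \<phi> = ennreal G" "G \<ge> 0"
    and BB: "(\<integral>\<^sup>+ x. ennreal ((\<phi> x)^2) \<partial>lebesgue) = ennreal B" "B \<ge> 0"
    and fint: "integrable lebesgue (\<lambda>x. (\<phi> x)^2 * ln ((\<phi> x)^2))"
    and t: "t > 0"
  shows "Lfun s lam (\<lambda>x. t * \<phi> x) = ereal (t^2 / 2 * (G + (lam + 1) * B - (\<integral>x. (\<phi> x)^2 * ln ((\<phi> x)^2) \<partial>lebesgue) - ln (t^2) * B))"
proof -
  define f where "f x = (\<phi> x)^2 * ln ((\<phi> x)^2)" for x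
  define v where "v x = (t * \<phi> x)^2 * ln ((t * \<phi> x)^2)" for x
  define c where "c = t^2 * ln (t^2)"
  have veq: "v = (\<lambda>x. t^2 * f x + c * (\<phi> x)^2)"
  proof
    fix x
    show "v x = t^2 * f x + c * (\<phi> x)^2"
    proof (cases "\<phi> x = 0")
      case True then show ?thesis by (simp add: v_def f_def)
    next
      case False
      then have "ln ((t * \<phi> x)^2) = ln (t^2) + ln ((\<phi> x)^2)"
        using t by (simp add: power_mult_distrib ln_mult)
      then show ?thesis by (simp add: v_def f_def c_def power_mult_distrib algebra_simps)
    qed
  qed
  have sqint: "integrable lebesgue (\<lambda>x. (\<phi> x)^2)"
  proof (rule integrableI_bounded)
    show "(\<lambda>x. (\<phi> x)^2) \<in> borel_measurable lebesgue" using \<phi> by measurable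
    show "(\<integral>\<^sup>+ x. ennreal (norm ((\<phi> x)^2)) \<partial>lebesgue) < \<infinity>" using BB by simp
  qed
  have fint': "integrable lebesgue f" using fint by (simp add: f_def[abs_def])
  have vint: "integrable lebesgue v"
    unfolding veq using fint' sqint by (intro Bochner_Integration.integrable_add integrable_mult_right)
  have Bint: "(\<integral>x. (\<phi> x)^2 \<partial>lebesgue) = B"
    using BB \<phi> by (subst integral_eq_nn_integral) auto
  have Iv: "(\<integral>x. v x \<partial>lebesgue) = t^2 * (\<integral>x. f x \<partial>lebesgue) + c * B"
    unfolding veq using fint' sqint Bint by simp
  obtain P where P: "(\<integral>\<^sup>+ x. ennreal (v x) \<partial>lebesgue) = ennreal P" "P \<ge> 0"
    using integrable_parts_finite(1)[OF vint] by (cases "(\<integral>\<^sup>+ x. ennreal (v x) \<partial>lebesgue)") auto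
  obtain Nn where Nn: "(\<integral>\<^sup>+ x. ennreal (- v x) \<partial>lebesgue) = ennreal Nn" "Nn \<ge> 0"
    using integrable_parts_finite(2)[OF vint] by (cases "(\<integral>\<^sup>+ x. ennreal (- v x) \<partial>lebesgue)") auto
  have PN: "P - Nn = t^2 * (\<integral>x. f x \<partial>lebesgue) + c * B"
    using real_lebesgue_integral_def[OF vint] P Nn Iv by simp
  have "Lfun s lam (\<lambda>x. t * \<phi> x) =
     ereal (1/2) * (ereal (t^2 * G) + ereal (lam + 1) * ereal (t^2 * B)) + ereal (1/2) * ereal Nn - ereal (1/2) * ereal P"
    unfolding Lfun_def gag_scale[OF \<phi>] sq_scale[OF \<phi>] GG(1) BB(1)
    using P Nn GG(2) BB(2) by (simp add: v_def ennreal_mult[symmetric])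
  also have "\<dots> = ereal (t^2 / 2 * (G + (lam + 1) * B - (\<integral>x. f x \<partial>lebesgue) - ln (t^2) * B))"
    using PN by (simp add: c_def algebra_simps)
  finally show ?thesis by (simp add: f_def)
qed

lemma INF_ereal_mult_left:
  fixes f :: "'b \<Rightarrow> ereal"
  assumes "Y \<noteq> {}" "x \<ge> 0"
  shows "ereal x * (INF i\<in>Y. f i) = (INF i\<in>Y. ereal x * f i)"
proof -
  have "(INF i\<in>Y. f i) = - (SUP i\<in>Y. - f i)"
    using ereal_SUP_uminus_eq[of f Y] by simp
  then have "ereal x * (INF i\<in>Y. f i) = - ((SUP i\<in>Y. - f i) * ereal x)" by (simp add: mult.commute)
  also have "(SUP i\<in>Y. - f i) * ereal x = (SUP i\<in>Y. - f i * ereal x)"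
    using assms by (rule Sup_ereal_mult_right')
  also have "- (SUP i\<in>Y. - f i * ereal x) = (INF i\<in>Y. - (- f i * ereal x))"
    using ereal_INF_uminus_eq[of "\<lambda>i. - f i * ereal x" Y] by simp
  also have "\<dots> = (INF i\<in>Y. ereal x * f i)" by (simp add: mult.commute)
  finally show ?thesis .
qed

lemma SUP_scale_pos:
  fixes g :: "real \<Rightarrow> ereal"
  assumes "e > 0"
  shows "(SUP t\<in>{0<..}. g (e * t)) = (SUP t\<in>{0<..}. g t)"
proof -
  have im: "(\<lambda>t. e * t) ` {0<..} = {0<..}"
  proof
    show "(\<lambda>t. e * t) ` {0<..} \<subseteq> {0<..}" using assms by auto
    show "{0<..} \<subseteq> (\<lambda>t. e * t) ` {0<..}"
    proof
      fix x :: real assume "x \<in> {0<..}"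
      then have "x = e * (x / e)" "x / e \<in> {0<..}" using assms by auto
      then show "x \<in> (\<lambda>t. e * t) ` {0<..}" by blast
    qed
  qed
  have "(SUP t\<in>{0<..}. g (e * t)) = Sup (g ` ((\<lambda>t. e * t) ` {0<..}))"
    by (simp add: image_image)
  then show ?thesis using im by simp
qed

lemma ereal_lower_aux:
  fixes G N P :: ennreal
  assumes "P \<le> G + N" "b \<ge> 0"
  shows "ereal (b / 2) \<le> ereal (1/2) * (enn2ereal G + ereal (0 + 1) * ereal b) + ereal (1/2) * enn2ereal N - ereal (1/2) * enn2ereal P"
proof (cases "G = \<infinity> \<or> N = \<infinity>")
  case True
  then show ?thesis by (cases P) auto
next
  case False
  then obtain g n where gn: "G = ennreal g" "N = ennreal n" "g \<ge> 0" "n \<ge> 0"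
    by (cases G; cases N) auto
  then have "P \<le> ennreal (g + n)" using assms by (simp add: ennreal_plus)
  then have Pl: "P \<le> ennreal (g + n)" .
  then obtain p where p0: "P = ennreal p" "p \<ge> 0"
    by (cases P) (auto simp: top_unique)
  have "ennreal p \<le> ennreal (g + n)" using Pl p0 by simp
  then have "p \<le> g + n" using gn by (subst (asm) ennreal_le_iff) auto
  with p0 have p: "P = ennreal p" "p \<ge> 0" "p \<le> g + n" by auto
  have e: "ereal (1/2) * (enn2ereal G + ereal (0 + 1) * ereal b) + ereal (1/2) * enn2ereal N - ereal (1/2) * enn2ereal P
      = ereal ((g + b) / 2 + n / 2 - p / 2)"
    using gn p by simp
  have "b / 2 \<le> (g + b) / 2 + n / 2 - p / 2" using p gn by (simp add: field_simps)
  then show ?thesis unfolding e by simp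
qed

lemma Hs_facts:
  assumes "\<phi> \<in> Hs s"
  shows "\<phi> \<in> borel_measurable lebesgue" "gagliardo s \<phi> < \<infinity>" "(\<integral>\<^sup>+ x. ennreal ((\<phi> x)^2) \<partial>lebesgue) < \<infinity>"
  using assms by (auto simp: Hs_def)

lemma B_pos:
  fixes \<phi> :: "'a::euclidean_space \<Rightarrow> real"
  assumes "\<phi> \<in> Hs s" "\<not> (AE x in lebesgue. \<phi> x = 0)"
  obtains B where "B > 0" "(\<integral>\<^sup>+ x. ennreal ((\<phi> x)^2) \<partial>lebesgue) = ennreal B"
proof -
  have m: "(\<lambda>x. ennreal ((\<phi> x)^2)) \<in> borel_measurable lebesgue" using Hs_facts(1)[OF assms(1)] by measurable
  have ne: "(\<integral>\<^sup>+ x. ennreal ((\<phi> x)^2) \<partial>lebesgue) \<noteq> 0"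
    using assms(2) by (subst nn_integral_0_iff_AE[OF m]) simp
  obtain B where B: "(\<integral>\<^sup>+ x. ennreal ((\<phi> x)^2) \<partial>lebesgue) = ennreal B" "B \<ge> 0"
    using Hs_facts(3)[OF assms(1)] by (cases "(\<integral>\<^sup>+ x. ennreal ((\<phi> x)^2) \<partial>lebesgue)") auto
  with ne have "B > 0" by (cases "B = 0") auto
  with B that show ?thesis by blast
qed

lemma Sv_infty:
  fixes \<phi> :: "'a::euclidean_space \<Rightarrow> real"
  assumes H: "\<phi> \<in> Hs s" and N: "(\<integral>\<^sup>+ x. ennreal (- ((\<phi> x)^2 * ln ((\<phi> x)^2))) \<partial>lebesgue) = \<infinity>"
  shows "(SUP t\<in>{0<..}. Lfun s lam (\<lambda>x. t * \<phi> x)) = \<infinity>"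
proof -
  obtain G where G: "gagliardo s \<phi> = ennreal G" using Hs_facts(2)[OF H] by (cases "gagliardo s \<phi>") auto
  obtain B where B: "(\<integral>\<^sup>+ x. ennreal ((\<phi> x)^2) \<partial>lebesgue) = ennreal B"
    using Hs_facts(3)[OF H] by (cases "(\<integral>\<^sup>+ x. ennreal ((\<phi> x)^2) \<partial>lebesgue)") auto
  have "Lfun s lam (\<lambda>x. 1 * \<phi> x) = \<infinity>"
    unfolding Lfun_def using G B N by simp
  then have "\<infinity> \<le> (SUP t\<in>{0<..}. Lfun s lam (\<lambda>x. t * \<phi> x))"
    by (intro SUP_upper2[of 1]) auto
  then show ?thesis by (simp add: top_unique)
qed

lemma Sv_lower:
  fixes \<phi> :: "'a::euclidean_space \<Rightarrow> real"
  assumes s: "s > 0" and H: "\<phi> \<in> Hs s" and nz: "\<not> (AE x in lebesgue. \<phi> x = 0)"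
  shows "ereal (exp (- KK s DIM('a)) / 2) \<le> (SUP t\<in>{0<..}. Lfun s 0 (\<lambda>x. t * \<phi> x))"
proof -
  obtain B where B: "B > 0" "(\<integral>\<^sup>+ x. ennreal ((\<phi> x)^2) \<partial>lebesgue) = ennreal B"
    using B_pos[OF H nz] by blast
  let ?K = "KK s DIM('a)"
  define t where "t = sqrt (exp (- ?K) / B)"
  have tp: "t > 0" using B by (simp add: t_def)
  have t2: "t^2 * B = exp (- ?K)" using B by (simp add: t_def)
  have m: "\<phi> \<in> borel_measurable lebesgue" by (rule Hs_facts(1)[OF H])
  have mu: "(\<lambda>x. t * \<phi> x) \<in> borel_measurable lebesgue" using m by measurable
  have Bu: "(\<integral>\<^sup>+ x. ennreal ((t * \<phi> x)^2) \<partial>lebesgue) = ennreal (exp (- ?K))"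
    unfolding sq_scale[OF m] B(2) using t2 B(1) by (metis ennreal_mult less_imp_le zero_le_power2)
  have C: "(\<integral>\<^sup>+ x. ennreal ((t * \<phi> x)^2 * ln ((t * \<phi> x)^2)) \<partial>lebesgue) + ennreal (exp (- ?K) * max 0 (- (ln (exp (- ?K)) + ?K)))
     \<le> gagliardo s (\<lambda>x. t * \<phi> x) + ennreal (exp (- ?K) * max 0 (ln (exp (- ?K)) + ?K)) + (\<integral>\<^sup>+ x. ennreal (- ((t * \<phi> x)^2 * ln ((t * \<phi> x)^2))) \<partial>lebesgue)"
    by (rule lemC[OF mu s Bu]) simp
  then have C': "(\<integral>\<^sup>+ x. ennreal ((t * \<phi> x)^2 * ln ((t * \<phi> x)^2)) \<partial>lebesgue)
     \<le> gagliardo s (\<lambda>x. t * \<phi> x) + (\<integral>\<^sup>+ x. ennreal (- ((t * \<phi> x)^2 * ln ((t * \<phi> x)^2))) \<partial>lebesgue)"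
    by simp
  have "ereal (exp (- ?K) / 2) \<le> Lfun s 0 (\<lambda>x. t * \<phi> x)"
    unfolding Lfun_def Bu enn2ereal_ennreal[OF less_imp_le[OF exp_gt_zero]]
    by (rule ereal_lower_aux[OF C']) simp
  also have "\<dots> \<le> (SUP t\<in>{0<..}. Lfun s 0 (\<lambda>x. t * \<phi> x))"
    using tp by (intro SUP_upper) auto
  finally show ?thesis .
qed

lemma bound_aux:
  fixes w a B :: real
  assumes w: "w > 0" and B: "B > 0"
  shows "w / 2 * (a - ln w * B) \<le> B / 2 * exp (a / B - 1)"
proof -
  define z where "z = a / B - 1 - ln w"
  have ez: "1 + z \<le> exp z" by (rule exp_ge_add_one_self)
  have e1: "a - ln w * B = B * (1 + z)" using B by (simp add: z_def field_simps)
  have e2: "w * exp z = exp (a / B - 1)" using w by (simp add: z_def exp_diff)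
  have "w * (1 + z) \<le> w * exp z" using ez w by simp
  then have "B * (w * (1 + z)) \<le> B * exp (a / B - 1)" using B e2 by simp
  then show ?thesis using e1 by (simp add: algebra_simps)
qed

lemma setup_finite:
  fixes \<phi> :: "'a::euclidean_space \<Rightarrow> real"
  assumes s: "s > 0" and H: "\<phi> \<in> Hs s" and nz: "\<not> (AE x in lebesgue. \<phi> x = 0)"
    and N: "(\<integral>\<^sup>+ x. ennreal (- ((\<phi> x)^2 * ln ((\<phi> x)^2))) \<partial>lebesgue) < \<infinity>"
  obtains G B where "G \<ge> 0" "B > 0" "gagliardo s \<phi> = ennreal G" "(\<integral>\<^sup>+ x. ennreal ((\<phi> x)^2) \<partial>lebesgue) = ennreal B"
    "integrable lebesgue (\<lambda>x. (\<phi> x)^2 * ln ((\<phi> x)^2))"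
proof -
  have m: "\<phi> \<in> borel_measurable lebesgue" by (rule Hs_facts(1)[OF H])
  obtain B where B: "B > 0" "(\<integral>\<^sup>+ x. ennreal ((\<phi> x)^2) \<partial>lebesgue) = ennreal B"
    using B_pos[OF H nz] by blast
  obtain G where G: "gagliardo s \<phi> = ennreal G" "G \<ge> 0" using Hs_facts(2)[OF H] by (cases "gagliardo s \<phi>") auto
  have C: "(\<integral>\<^sup>+ x. ennreal ((\<phi> x)^2 * ln ((\<phi> x)^2)) \<partial>lebesgue) + ennreal (B * max 0 (- (ln B + KK s DIM('a))))
     \<le> gagliardo s \<phi> + ennreal (B * max 0 (ln B + KK s DIM('a))) + (\<integral>\<^sup>+ x. ennreal (- ((\<phi> x)^2 * ln ((\<phi> x)^2))) \<partial>lebesgue)"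
    by (rule lemC[OF m s B(2) B(1)])
  have fin: "gagliardo s \<phi> + ennreal (B * max 0 (ln B + KK s DIM('a))) + (\<integral>\<^sup>+ x. ennreal (- ((\<phi> x)^2 * ln ((\<phi> x)^2))) \<partial>lebesgue) < \<infinity>"
    using G N by (simp add: less_top)
  then have P: "(\<integral>\<^sup>+ x. ennreal ((\<phi> x)^2 * ln ((\<phi> x)^2)) \<partial>lebesgue) < \<infinity>"
  proof -
    have "(\<integral>\<^sup>+ x. ennreal ((\<phi> x)^2 * ln ((\<phi> x)^2)) \<partial>lebesgue) \<le> (\<integral>\<^sup>+ x. ennreal ((\<phi> x)^2 * ln ((\<phi> x)^2)) \<partial>lebesgue) + ennreal (B * max 0 (- (ln B + KK s DIM('a))))"
      by simp
    also note C
    finally show ?thesis using fin by (rule le_less_trans)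
  qed
  have "integrable lebesgue (\<lambda>x. (\<phi> x)^2 * ln ((\<phi> x)^2))"
  proof (rule integrable_split)
    show "(\<lambda>x. (\<phi> x)\<^sup>2 * ln ((\<phi> x)\<^sup>2)) \<in> borel_measurable lebesgue" using m by measurable
  qed (use P N in auto)
  with G B that show ?thesis by blast
qed

lemma h_scale:
  fixes G B I lam t :: real
  assumes t: "t > 0"
  shows "t^2 / 2 * (G + (lam + 1) * B - I - ln (t^2) * B)
       = (exp (- lam / 2) * t)^2 / 2 * (G + (0 + 1) * B - I - ln ((exp (- lam / 2) * t)^2) * B) * exp lam"
proof -
  have e2: "(exp (- lam / 2))^2 = exp (- lam)"
    by (simp add: power2_eq_square exp_add[symmetric])
  have sq: "(exp (- lam / 2) * t)^2 = exp (- lam) * t^2" unfolding power_mult_distrib e2 ..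
  have l: "ln ((exp (- lam / 2) * t)^2) = - lam + ln (t^2)"
    unfolding sq using t by (simp add: ln_mult)
  have ee: "exp (- lam) * exp lam = 1" by (simp add: exp_minus)
  have "(exp (- lam / 2) * t)^2 / 2 * (G + (0 + 1) * B - I - ln ((exp (- lam / 2) * t)^2) * B) * exp lam
      = (exp (- lam) * exp lam) * (t^2 / 2 * (G + (lam + 1) * B - I - ln (t^2) * B))"
    unfolding l unfolding sq by (simp add: field_simps)
  also have "\<dots> = t^2 / 2 * (G + (lam + 1) * B - I - ln (t^2) * B)" by (simp add: ee)
  finally show ?thesis by simp
qed

lemma Sv_scale:
  fixes \<phi> :: "'a::euclidean_space \<Rightarrow> real"
  assumes s: "s > 0" and H: "\<phi> \<in> Hs s" and nz: "\<not> (AE x in lebesgue. \<phi> x = 0)"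
  shows "(SUP t\<in>{0<..}. Lfun s lam (\<lambda>x. t * \<phi> x)) = ereal (exp lam) * (SUP t\<in>{0<..}. Lfun s 0 (\<lambda>x. t * \<phi> x))"
proof (cases "(\<integral>\<^sup>+ x. ennreal (- ((\<phi> x)^2 * ln ((\<phi> x)^2))) \<partial>lebesgue) = \<infinity>")
  case True
  then show ?thesis using Sv_infty[OF H True, of lam] Sv_infty[OF H True, of 0] by simp
next
  case False
  then have N: "(\<integral>\<^sup>+ x. ennreal (- ((\<phi> x)^2 * ln ((\<phi> x)^2))) \<partial>lebesgue) < \<infinity>" by (simp add: less_top)
  obtain G B where GB: "G \<ge> 0" "B > 0" "gagliardo s \<phi> = ennreal G" "(\<integral>\<^sup>+ x. ennreal ((\<phi> x)^2) \<partial>lebesgue) = ennreal B"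
    "integrable lebesgue (\<lambda>x. (\<phi> x)^2 * ln ((\<phi> x)^2))"
    using setup_finite[OF s H nz N] by blast
  have m: "\<phi> \<in> borel_measurable lebesgue" by (rule Hs_facts(1)[OF H])
  define I where "I = (\<integral>x. (\<phi> x)^2 * ln ((\<phi> x)^2) \<partial>lebesgue)"
  define h where "h l t = t^2 / 2 * (G + (l + 1) * B - I - ln (t^2) * B)" for l t :: real
  have Lh: "Lfun s l (\<lambda>x. t * \<phi> x) = ereal (h l t)" if "t > 0" for l t
    unfolding h_def I_def using Lfun_explicit[OF m GB(3,1) GB(4) _ GB(5) that] GB(2) by simp
  define e where "e = exp (- lam / 2)"
  have ep: "e > 0" by (simp add: e_def)
  have "(SUP t\<in>{0<..}. Lfun s lam (\<lambda>x. t * \<phi> x)) = (SUP t\<in>{0<..}. ereal (h 0 (e * t)) * ereal (exp lam))"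
  proof (rule SUP_cong)
    fix t :: real assume "t \<in> {0<..}"
    then have t: "t > 0" by simp
    show "Lfun s lam (\<lambda>x. t * \<phi> x) = ereal (h 0 (e * t)) * ereal (exp lam)"
      unfolding Lh[OF t] h_def e_def using h_scale[OF t, of G lam B I] by simp
  qed simp
  also have "\<dots> = (SUP t\<in>{0<..}. ereal (h 0 (e * t))) * ereal (exp lam)"
    by (rule Sup_ereal_mult_right'[symmetric]) auto
  also have "(SUP t\<in>{0<..}. ereal (h 0 (e * t))) = (SUP t\<in>{0<..}. ereal (h 0 t))"
    using SUP_scale_pos[OF ep, of "\<lambda>t. ereal (h 0 t)"] by simp
  also have "(SUP t\<in>{0<..}. ereal (h 0 t)) = (SUP t\<in>{0<..}. Lfun s 0 (\<lambda>x. t * \<phi> x))"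
    by (rule SUP_cong) (simp_all add: Lh)
  finally show ?thesis by (simp add: mult.commute)
qed

lemma Sv_finite:
  fixes \<phi> :: "'a::euclidean_space \<Rightarrow> real"
  assumes s: "s > 0" and H: "\<phi> \<in> Hs s" and nz: "\<not> (AE x in lebesgue. \<phi> x = 0)"
    and N: "(\<integral>\<^sup>+ x. ennreal (- ((\<phi> x)^2 * ln ((\<phi> x)^2))) \<partial>lebesgue) < \<infinity>"
  shows "(SUP t\<in>{0<..}. Lfun s 0 (\<lambda>x. t * \<phi> x)) < \<infinity>"
proof -
  obtain G B where GB: "G \<ge> 0" "B > 0" "gagliardo s \<phi> = ennreal G" "(\<integral>\<^sup>+ x. ennreal ((\<phi> x)^2) \<partial>lebesgue) = ennreal B"
    "integrable lebesgue (\<lambda>x. (\<phi> x)^2 * ln ((\<phi> x)^2))"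
    using setup_finite[OF s H nz N] by blast
  have m: "\<phi> \<in> borel_measurable lebesgue" by (rule Hs_facts(1)[OF H])
  define I where "I = (\<integral>x. (\<phi> x)^2 * ln ((\<phi> x)^2) \<partial>lebesgue)"
  have "(SUP t\<in>{0<..}. Lfun s 0 (\<lambda>x. t * \<phi> x)) \<le> ereal (B / 2 * exp ((G + B - I) / B - 1))"
  proof (rule SUP_least)
    fix t :: real assume "t \<in> {0<..}"
    then have t: "t > 0" by simp
    have "Lfun s 0 (\<lambda>x. t * \<phi> x) = ereal (t^2 / 2 * ((G + B - I) - ln (t^2) * B))"
      using Lfun_explicit[OF m GB(3,1) GB(4) _ GB(5) t, of 0] GB(2) by (simp add: I_def algebra_simps)
    also have "\<dots> \<le> ereal (B / 2 * exp ((G + B - I) / B - 1))"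
      using bound_aux[of "t^2" B "G + B - I"] t GB(2) by simp
    finally show "Lfun s 0 (\<lambda>x. t * \<phi> x) \<le> ereal (B / 2 * exp ((G + B - I) / B - 1))" .
  qed
  then show ?thesis by (rule le_less_trans) simp
qed

lemma dyadic_small:
  fixes r :: real assumes "0 < r" "r \<le> 1"
  obtains k :: nat where "1 / 2 ^ (k + 1) < r" "r \<le> 1 / 2 ^ k"
proof -
  define y where "y = log 2 (1 / r)"
  have y0: "y \<ge> 0" using assms by (simp add: y_def)
  define k where "k = nat \<lfloor>y\<rfloor>"
  have k1: "real k \<le> y" using y0 by (simp add: k_def)
  have k2: "y < real k + 1" using y0 by (simp add: k_def)
  have "2 ^ k = 2 powr (real k)" by (simp add: powr_realpow)
  also have "\<dots> \<le> 2 powr y" using k1 by (intro powr_mono) auto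
  also have "2 powr y = 1 / r" using assms by (simp add: y_def)
  finally have a: "r \<le> 1 / 2 ^ k" using assms by (simp add: field_simps)
  have "1 / r = 2 powr y" using assms by (simp add: y_def)
  also have "\<dots> < 2 powr (real k + 1)" using k2 by (intro powr_less_mono) auto
  also have "\<dots> = 2 ^ (k + 1)" by (simp add: powr_add powr_realpow[symmetric])
  finally have b: "1 / 2 ^ (k + 1) < r" using assms by (simp add: field_simps)
  from a b that show ?thesis by blast
qed

lemma dyadic_large:
  fixes r :: real assumes "1 \<le> r"
  obtains k :: nat where "2 ^ k \<le> r" "r < 2 ^ (k + 1)"
proof -
  define y where "y = log 2 r"
  have y0: "y \<ge> 0" using assms by (simp add: y_def)
  define k where "k = nat \<lfloor>y\<rfloor>"
  have k1: "real k \<le> y" using y0 by (simp add: k_def)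
  have k2: "y < real k + 1" using y0 by (simp add: k_def)
  have "2 ^ k = 2 powr (real k)" by (simp add: powr_realpow)
  also have "\<dots> \<le> 2 powr y" using k1 by (intro powr_mono) auto
  also have "2 powr y = r" using assms by (simp add: y_def)
  finally have a: "2 ^ k \<le> r" .
  have "r = 2 powr y" using assms by (simp add: y_def)
  also have "\<dots> < 2 powr (real k + 1)" using k2 by (intro powr_less_mono) auto
  also have "\<dots> = 2 ^ (k + 1)" by (simp add: powr_add powr_realpow[symmetric])
  finally have b: "r < 2 ^ (k + 1)" .
  from a b that show ?thesis by blast
qed

lemma ennreal_term_le_suminf: "(f :: nat \<Rightarrow> ennreal) n \<le> (\<Sum>j. f j)"
proof -
  have "sum f {n} \<le> suminf f" by (rule sum_le_suminf) (auto intro: summableI)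
  then show ?thesis by simp
qed

lemma geom_ennreal_finite:
  fixes A r :: real
  assumes "A \<ge> 0" "0 \<le> r" "r < 1"
  shows "(\<Sum>j. ennreal (A * r ^ j)) < \<infinity>"
proof -
  have "summable (\<lambda>j. A * r ^ j)" using assms by (intro summable_mult summable_geometric) auto
  then have "(\<Sum>j. ennreal (A * r ^ j)) = ennreal (\<Sum>j. A * r ^ j)"
    using assms by (intro suminf_ennreal2) auto
  then show ?thesis by simp
qed

lemma inv_pow2: "(1 / 2 ^ k :: real) = 2 powr (- real k)"
proof -
  have "2 powr (- real k) = inverse (2 powr real k)" by (rule powr_minus)
  also have "2 powr real k = (2::real) ^ k" by (rule powr_realpow) simp
  finally show ?thesis by (simp only: divide_inverse mult_1)
qed

lemma pow2_powr': "((2::real) ^ k) powr e = (2 powr e) ^ k"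
proof -
  have "(2::real) ^ k = 2 powr real k" by (rule powr_realpow[symmetric]) simp
  then have "(2 ^ k :: real) powr e = 2 powr (real k * e)" by (simp only: powr_powr)
  also have "\<dots> = (2 powr e) powr real k" by (simp only: powr_powr mult.commute)
  also have "\<dots> = (2 powr e) ^ k" by (rule powr_realpow) simp
  finally show ?thesis .
qed

lemma pow2_powr: "((2::real) powr (- real m)) powr e = (2 powr (- e)) ^ m"
proof -
  have "((2::real) powr (- real m)) powr e = 2 powr (real m * (- e))" by (simp only: powr_powr mult_minus_left mult_minus_right)
  also have "\<dots> = (2 powr (- e)) powr real m" by (simp only: powr_powr mult.commute)
  also have "\<dots> = (2 powr (- e)) ^ m" by (rule powr_realpow) simp
  finally show ?thesis .
qed

lemma kern_pointwise:
  fixes h :: "'a::euclidean_space" and s :: real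
  assumes s: "0 < s" "s < 1"
  defines "p \<equiv> real DIM('a) + 2 * s"
  shows "ennreal (min ((norm h)^2) 1 / norm h powr p)
    \<le> (\<Sum>j. ennreal (max 1 (2 powr (p - 2)) * (2 powr (p - 2)) ^ j) * indicator (cball 0 (1 / 2 ^ j)) h)
     + (\<Sum>j. ennreal ((2 powr (- p)) ^ j) * indicator (ball 0 (2 ^ (j + 1))) h)"
proof -
  let ?q1 = "2 powr (p - 2)" and ?q2 = "2 powr (- p)"
  let ?C = "max 1 ?q1"
  have pp: "p > 0" using s by (simp add: p_def)
  consider "h = 0" | "0 < norm h" "norm h \<le> 1" | "norm h \<ge> 1" by force
  then show ?thesis
  proof cases
    case 1 then show ?thesis by simp
  next
    case 2
    have val: "min ((norm h)^2) 1 / norm h powr p = norm h powr (2 - p)"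
    proof -
      have "(norm h)^2 \<le> 1" using 2 by (simp add: power_le_one)
      moreover have "norm h powr 2 = (norm h)^2"
        using powr_realpow[OF 2(1), of 2] by (simp only: of_nat_numeral)
      ultimately have "min ((norm h)^2) 1 / norm h powr p = norm h powr 2 / norm h powr p"
        by (simp add: min_def)
      also have "\<dots> = norm h powr (2 - p)" by (rule powr_diff[symmetric])
      finally show ?thesis .
    qed
    obtain k :: nat where k: "1 / 2 ^ (k + 1) < norm h" "norm h \<le> 1 / 2 ^ k"
      using dyadic_small[OF 2] by blast
    have "\<exists>j. norm h powr (2 - p) \<le> ?C * ?q1 ^ j \<and> h \<in> cball 0 (1 / 2 ^ j)"
    proof (cases "p \<ge> 2")
      case True
      have "norm h powr (2 - p) \<le> (1 / 2 ^ (k + 1)) powr (2 - p)"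
        using True k by (intro powr_mono2') auto
      also have "(1 / 2 ^ (k + 1)) powr (2 - p) = ?q1 ^ (k + 1)"
        unfolding inv_pow2 pow2_powr minus_diff_eq ..
      also have "\<dots> = ?q1 * ?q1 ^ k" by simp
      also have "\<dots> \<le> ?C * ?q1 ^ k" by (intro mult_right_mono) auto
      finally show ?thesis using k by (intro exI[of _ k]) (auto simp: dist_norm)
    next
      case False
      have "norm h powr (2 - p) \<le> 1 powr (2 - p)" using 2 False by (intro powr_mono2) auto
      then have "norm h powr (2 - p) \<le> 1" by simp
      also have "\<dots> \<le> ?C * ?q1 ^ 0" by simp
      finally show ?thesis using 2 by (intro exI[of _ 0]) (auto simp: dist_norm)
    qed
    then obtain j where j: "norm h powr (2 - p) \<le> ?C * ?q1 ^ j" "h \<in> cball 0 (1 / 2 ^ j)" by blast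
    have "ennreal (min ((norm h)^2) 1 / norm h powr p) \<le> ennreal (?C * ?q1 ^ j) * indicator (cball 0 (1 / 2 ^ j)) h"
      using j val by (simp add: ennreal_leI)
    also have "\<dots> \<le> (\<Sum>j. ennreal (?C * ?q1 ^ j) * indicator (cball 0 (1 / 2 ^ j)) h)"
      by (rule ennreal_term_le_suminf[where f = "\<lambda>j. ennreal (?C * ?q1 ^ j) * indicator (cball 0 (1 / 2 ^ j)) h"])
    finally show ?thesis by (simp add: add_increasing2)
  next
    case 3
    obtain k :: nat where k: "2 ^ k \<le> norm h" "norm h < 2 ^ (k + 1)"
      using dyadic_large[OF 3] by blast
    have val: "min ((norm h)^2) 1 / norm h powr p = norm h powr (- p)"
    proof -
      have "(norm h)^2 \<ge> 1" using 3 by (simp add: one_le_power)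
      then have "min ((norm h)^2) 1 = 1" by (rule min_absorb2)
      then show ?thesis by (simp only: powr_minus_divide)
    qed
    have "norm h powr (- p) \<le> (2 ^ k) powr (- p)"
      using k pp by (intro powr_mono2') auto
    also have "(2 ^ k :: real) powr (- p) = ?q2 ^ k"
      by (rule pow2_powr')
    finally have b: "norm h powr (- p) \<le> ?q2 ^ k" .
    have "ennreal (min ((norm h)^2) 1 / norm h powr p) \<le> ennreal (?q2 ^ k) * indicator (ball 0 (2 ^ (k + 1))) h"
      using b val k by (simp add: ennreal_leI dist_norm)
    also have "\<dots> \<le> (\<Sum>j. ennreal (?q2 ^ j) * indicator (ball 0 (2 ^ (j + 1))) h)"
      by (rule ennreal_term_le_suminf[where f = "\<lambda>j. ennreal (?q2 ^ j) * indicator (ball 0 (2 ^ (j + 1))) h"])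
    finally show ?thesis by (simp add: add_increasing)
  qed
qed

lemma pow2_real: "(2::real) powr (real n) = 2 ^ n"
  by (rule powr_realpow) simp

lemma kern_finite:
  fixes s :: real
  assumes s: "0 < s" "s < 1"
  shows "(\<integral>\<^sup>+ h. ennreal (min ((norm h)^2) 1 / norm h powr (real DIM('a) + 2 * s)) \<partial>(lborel :: 'a::euclidean_space measure)) < \<infinity>"
proof -
  define p where "p = real DIM('a) + 2 * s"
  define q1 where "q1 = (2::real) powr (p - 2)"
  define q2 where "q2 = (2::real) powr (- p)"
  define C where "C = max 1 q1"
  define om where "om = unit_ball_vol (real DIM('a))"
  define N where "N = DIM('a)"
  have om: "om > 0" by (simp add: om_def)
  have [measurable]: "cball (0::'a) r \<in> sets borel" "ball (0::'a) r \<in> sets borel" for r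
    by (simp_all add: borel_closed borel_open)
  have q1: "q1 > 0" "q2 > 0" by (simp_all add: q1_def q2_def)
  have C: "C > 0" by (simp add: C_def)
  let ?S1 = "\<lambda>h. (\<Sum>j. ennreal (C * q1 ^ j) * indicator (cball (0::'a) (1 / 2 ^ j)) h)"
  let ?S2 = "\<lambda>h. (\<Sum>j. ennreal (q2 ^ j) * indicator (ball (0::'a) (2 ^ (j + 1))) h)"
  have "(\<integral>\<^sup>+ h. ennreal (min ((norm h)^2) 1 / norm h powr p) \<partial>(lborel :: 'a measure))
      \<le> (\<integral>\<^sup>+ h. ?S1 h + ?S2 h \<partial>lborel)"
    by (rule nn_integral_mono) (use kern_pointwise[OF s] in \<open>simp add: p_def q1_def q2_def C_def\<close>)
  also have "\<dots> = (\<integral>\<^sup>+ h. ?S1 h \<partial>lborel) + (\<integral>\<^sup>+ h. ?S2 h \<partial>lborel)"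
    by (rule nn_integral_add) measurable
  also have "(\<integral>\<^sup>+ h. ?S1 h \<partial>lborel) = (\<Sum>j. ennreal (C * om * (q1 / 2 ^ N) ^ j))"
  proof -
    have "(\<integral>\<^sup>+ h. ?S1 h \<partial>lborel) = (\<Sum>j. \<integral>\<^sup>+ h. ennreal (C * q1 ^ j) * indicator (cball (0::'a) (1 / 2 ^ j)) h \<partial>lborel)"
      by (rule nn_integral_suminf) measurable
    also have "\<dots> = (\<Sum>j. ennreal (C * om * (q1 / 2 ^ N) ^ j))"
    proof (rule suminf_cong)
      fix j :: nat
      have "(\<integral>\<^sup>+ h. ennreal (C * q1 ^ j) * indicator (cball (0::'a) (1 / 2 ^ j)) h \<partial>lborel)
          = ennreal (C * q1 ^ j) * ennreal (om * (1 / 2 ^ j) ^ N)"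
        by (simp add: nn_integral_cmult_indicator emeasure_cball om_def N_def)
      also have "\<dots> = ennreal (C * om * (q1 / 2 ^ N) ^ j)"
      proof -
        have "(1 / 2 ^ j :: real) ^ N = (1 / 2 ^ N) ^ j"
          by (simp add: power_one_over power_mult[symmetric] mult.commute)
        then have "C * q1 ^ j * (om * (1 / 2 ^ j) ^ N) = C * om * (q1 / 2 ^ N) ^ j"
          by (simp add: power_divide)
        then show ?thesis using C q1 om by (simp add: ennreal_mult[symmetric])
      qed
      finally show "(\<integral>\<^sup>+ h. ennreal (C * q1 ^ j) * indicator (cball (0::'a) (1 / 2 ^ j)) h \<partial>lborel) = ennreal (C * om * (q1 / 2 ^ N) ^ j)" .
    qed
    finally show ?thesis .
  qed
  also have "(\<integral>\<^sup>+ h. ?S2 h \<partial>lborel) = (\<Sum>j. ennreal (om * 2 ^ N * (q2 * 2 ^ N) ^ j))"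
  proof -
    have "(\<integral>\<^sup>+ h. ?S2 h \<partial>lborel) = (\<Sum>j. \<integral>\<^sup>+ h. ennreal (q2 ^ j) * indicator (ball (0::'a) (2 ^ (j + 1))) h \<partial>lborel)"
      by (rule nn_integral_suminf) measurable
    also have "\<dots> = (\<Sum>j. ennreal (om * 2 ^ N * (q2 * 2 ^ N) ^ j))"
    proof (rule suminf_cong)
      fix j :: nat
      have "(\<integral>\<^sup>+ h. ennreal (q2 ^ j) * indicator (ball (0::'a) (2 ^ (j + 1))) h \<partial>lborel)
          = ennreal (q2 ^ j) * ennreal (om * (2 ^ (j + 1)) ^ N)"
        by (simp add: nn_integral_cmult_indicator emeasure_ball om_def N_def)
      also have "\<dots> = ennreal (om * 2 ^ N * (q2 * 2 ^ N) ^ j)"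
      proof -
        have "((2::real) ^ (j + 1)) ^ N = 2 ^ N * (2 ^ N) ^ j"
          by (simp add: power_mult[symmetric] power_add mult.commute)
        then have "q2 ^ j * (om * (2 ^ (j + 1)) ^ N) = om * 2 ^ N * (q2 * 2 ^ N) ^ j"
          by (simp add: power_mult_distrib)
        then show ?thesis using q1 om by (simp add: ennreal_mult[symmetric])
      qed
      finally show "(\<integral>\<^sup>+ h. ennreal (q2 ^ j) * indicator (ball (0::'a) (2 ^ (j + 1))) h \<partial>lborel) = ennreal (om * 2 ^ N * (q2 * 2 ^ N) ^ j)" .
    qed
    finally show ?thesis .
  qed
  also have "(\<Sum>j. ennreal (C * om * (q1 / 2 ^ N) ^ j)) + (\<Sum>j. ennreal (om * 2 ^ N * (q2 * 2 ^ N) ^ j)) < \<infinity>"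
  proof -
    have "q1 < 2 powr (real N)" unfolding q1_def p_def N_def using s by (intro powr_less_mono) auto
    then have r1: "q1 / 2 ^ N < 1" unfolding pow2_real by simp
    have "q2 * 2 ^ N = 2 powr (- p) * 2 powr (real N)" by (simp add: q2_def pow2_real)
    also have "\<dots> = 2 powr (- p + real N)" by (rule powr_add[symmetric])
    also have "\<dots> < 2 powr 0" unfolding p_def N_def using s by (intro powr_less_mono) auto
    finally have r2: "q2 * 2 ^ N < 1" by simp
    have "(\<Sum>j. ennreal (C * om * (q1 / 2 ^ N) ^ j)) < \<infinity>"
      using r1 C q1 om by (intro geom_ennreal_finite) auto
    moreover have "(\<Sum>j. ennreal (om * 2 ^ N * (q2 * 2 ^ N) ^ j)) < \<infinity>"
      using r2 q1 om by (intro geom_ennreal_finite) auto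
    ultimately show ?thesis by (simp add: less_top)
  qed
  finally show ?thesis by (simp add: p_def)
qed

lemma nn_integral_affine_eucl:
  fixes f :: "'a::euclidean_space \<Rightarrow> ennreal" and t :: 'a
  assumes [measurable]: "f \<in> borel_measurable borel" and c: "c \<noteq> 0"
  shows "(\<integral>\<^sup>+x. f x \<partial>lborel) = ennreal (\<bar>c\<bar> ^ DIM('a)) * (\<integral>\<^sup>+x. f (t + c *\<^sub>R x) \<partial>lborel)"
  by (subst lborel_affine[OF c, of t]) (simp add: nn_integral_density nn_integral_distr nn_integral_cmult)

definition tent :: "'a::euclidean_space \<Rightarrow> real" where "tent x = max 0 (1 - norm x)"

lemma tent_bound:
  fixes x y :: "'a::euclidean_space"
  assumes p: "p \<ge> 0"
  shows "ennreal ((tent x - tent y)^2 / norm (x - y) powr p)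
    \<le> indicator (ball 0 1) x * ennreal (min ((norm (x - y))^2) 1 / norm (x - y) powr p)
     + indicator (ball 0 1) y * ennreal (min ((norm (x - y))^2) 1 / norm (x - y) powr p)"
proof (cases "x \<in> ball 0 1 \<or> y \<in> ball 0 1")
  case False
  then have "tent x = 0" "tent y = 0" by (auto simp: tent_def)
  then show ?thesis by simp
next
  case True
  have l1: "\<bar>tent x - tent y\<bar> \<le> norm (x - y)"
  proof -
    have "\<bar>tent x - tent y\<bar> \<le> \<bar>norm x - norm y\<bar>" unfolding tent_def by (simp add: max_def abs_le_iff) linarith
    also have "\<dots> \<le> norm (x - y)" by (rule norm_triangle_ineq3)
    finally show ?thesis .
  qed
  have l2: "\<bar>tent x - tent y\<bar> \<le> 1" unfolding tent_def using norm_ge_zero[of x] norm_ge_zero[of y] by (simp add: max_def abs_le_iff) (smt (verit) norm_ge_zero)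
  have sq: "(tent x - tent y)^2 \<le> min ((norm (x - y))^2) 1"
  proof -
    have "(tent x - tent y)^2 = \<bar>tent x - tent y\<bar>^2" by simp
    moreover have "\<bar>tent x - tent y\<bar>^2 \<le> (norm (x - y))^2" using l1 by (intro power_mono) auto
    moreover have "\<bar>tent x - tent y\<bar>^2 \<le> 1" using l2 by (simp add: abs_square_le_1)
    ultimately show ?thesis by simp
  qed
  have "(tent x - tent y)^2 / norm (x - y) powr p \<le> min ((norm (x - y))^2) 1 / norm (x - y) powr p"
    using sq by (intro divide_right_mono) auto
  then have a: "ennreal ((tent x - tent y)^2 / norm (x - y) powr p) \<le> ennreal (min ((norm (x - y))^2) 1 / norm (x - y) powr p)"
    by (rule ennreal_leI)
  show ?thesis
  proof (cases "x \<in> ball 0 1")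
    case True then show ?thesis using a by (simp add: add_increasing2)
  next
    case False
    with \<open>x \<in> ball 0 1 \<or> y \<in> ball 0 1\<close> have "y \<in> ball 0 1" by blast
    then show ?thesis using a False by simp
  qed
qed

lemma ball_borel[measurable]: "ball (c::'a::euclidean_space) r \<in> sets borel"
  by (simp add: borel_open)

lemma tent_gag:
  fixes s :: real
  assumes s: "0 < s" "s < 1"
  shows "gagliardo s (tent :: 'a::euclidean_space \<Rightarrow> real) < \<infinity>"
proof -
  define p where "p = real DIM('a) + 2 * s"
  have p0: "p \<ge> 0" using s by (simp add: p_def)
  define K where "K h = ennreal (min ((norm h)^2) 1 / norm h powr p)" for h :: 'a
  define J where "J = (\<integral>\<^sup>+ h. K h \<partial>(lborel :: 'a measure))"
  have Jf: "J < \<infinity>" unfolding J_def K_def p_def using kern_finite[OF s] by simp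
  have Km[measurable]: "K \<in> borel_measurable borel" unfolding K_def by measurable
  have in1: "(\<integral>\<^sup>+ y. K (x - y) \<partial>lborel) = J" for x
    unfolding J_def using nn_integral_affine_eucl[OF Km, of "-1" x] by simp
  have in2: "(\<integral>\<^sup>+ x. K (x - y) \<partial>lborel) = J" for y
    unfolding J_def using nn_integral_affine_eucl[OF Km, of 1 "-y"] by (simp add: algebra_simps)
  have pm: "(\<lambda>(x, y). indicator (ball (0::'a) 1) y * K (x - y)) \<in> borel_measurable (lborel \<Otimes>\<^sub>M lborel)"
    by measurable
  let ?I = "ball (0::'a) 1"
  have "gagliardo s (tent :: 'a \<Rightarrow> real) = (\<integral>\<^sup>+ x. (\<integral>\<^sup>+ y. ennreal ((tent x - tent y)^2 / norm (x - y) powr p) \<partial>lborel) \<partial>(lborel :: 'a measure))"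
    unfolding gagliardo_def p_def nn_integral_completion ..
  also have "\<dots> \<le> (\<integral>\<^sup>+ x. (\<integral>\<^sup>+ y. indicator ?I x * K (x - y) + indicator ?I y * K (x - y) \<partial>lborel) \<partial>lborel)"
    unfolding K_def by (intro nn_integral_mono tent_bound p0)
  also have "\<dots> = (\<integral>\<^sup>+ x. indicator ?I x * J + (\<integral>\<^sup>+ y. indicator ?I y * K (x - y) \<partial>lborel) \<partial>lborel)"
  proof (rule nn_integral_cong)
    fix x :: 'a
    have "(\<integral>\<^sup>+ y. indicator ?I x * K (x - y) + indicator ?I y * K (x - y) \<partial>lborel)
        = (\<integral>\<^sup>+ y. indicator ?I x * K (x - y) \<partial>lborel) + (\<integral>\<^sup>+ y. indicator ?I y * K (x - y) \<partial>lborel)"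
      by (rule nn_integral_add) measurable
    also have "(\<integral>\<^sup>+ y. indicator ?I x * K (x - y) \<partial>lborel) = indicator ?I x * J"
      by (subst nn_integral_cmult) (measurable, simp add: in1)
    finally show "(\<integral>\<^sup>+ y. indicator ?I x * K (x - y) + indicator ?I y * K (x - y) \<partial>lborel)
        = indicator ?I x * J + (\<integral>\<^sup>+ y. indicator ?I y * K (x - y) \<partial>lborel)" .
  qed
  also have "\<dots> = (\<integral>\<^sup>+ x. indicator ?I x * J \<partial>lborel) + (\<integral>\<^sup>+ x. (\<integral>\<^sup>+ y. indicator ?I y * K (x - y) \<partial>lborel) \<partial>lborel)"
  proof (rule nn_integral_add)
    show "(\<lambda>x. indicator ?I x * J) \<in> borel_measurable lborel" by measurable
    show "(\<lambda>x. \<integral>\<^sup>+ y. indicator ?I y * K (x - y) \<partial>lborel) \<in> borel_measurable lborel"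
      using pm by (rule lborel.borel_measurable_nn_integral)
  qed
  also have "(\<integral>\<^sup>+ x. (\<integral>\<^sup>+ y. indicator ?I y * K (x - y) \<partial>lborel) \<partial>lborel)
      = (\<integral>\<^sup>+ y. (\<integral>\<^sup>+ x. indicator ?I y * K (x - y) \<partial>lborel) \<partial>lborel)"
    using lborel_pair.Fubini'[OF pm] by simp
  also have "\<dots> = (\<integral>\<^sup>+ y. indicator ?I y * J \<partial>lborel)"
    by (intro nn_integral_cong) (subst nn_integral_cmult, measurable, simp add: in2)
  also have "(\<integral>\<^sup>+ y. indicator ?I y * J \<partial>lborel) = J * emeasure lborel ?I"
  proof -
    have "(\<integral>\<^sup>+ y. indicator ?I y * J \<partial>lborel) = (\<integral>\<^sup>+ y. J * indicator ?I y \<partial>lborel)"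
      by (simp only: mult.commute)
    also have "\<dots> = J * emeasure lborel ?I" by (rule nn_integral_cmult_indicator) simp
    finally show ?thesis .
  qed
  finally have "gagliardo s (tent :: 'a \<Rightarrow> real) \<le> J * emeasure lborel ?I + J * emeasure lborel ?I"
    using nn_integral_cmult_indicator[of ?I lborel J] by (simp add: mult.commute)
  also have "\<dots> < \<infinity>" using Jf emeasure_lborel_ball_finite[of "0::'a" 1]
    by (simp add: ennreal_mult_less_top less_top)
  finally show ?thesis .
qed

lemma tent_meas: "(tent :: 'a::euclidean_space \<Rightarrow> real) \<in> borel_measurable lebesgue"
proof -
  have "(tent :: 'a \<Rightarrow> real) \<in> borel_measurable lborel" unfolding tent_def by measurable
  then show ?thesis by (rule measurable_completion)
qed

lemma tent_props: "0 \<le> tent x" "tent x \<le> 1" "tent x = 0 \<longleftrightarrow> x \<notin> ball 0 1"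
  by (auto simp: tent_def)

lemma neg_xlogx: "0 \<le> (y::real) \<Longrightarrow> y \<le> 1 \<Longrightarrow> - (y * ln y) \<le> 1"
proof (cases "y = 0")
  case False
  assume y: "0 \<le> y" "y \<le> 1"
  then have yp: "y > 0" using False by simp
  have "ln (1 / y) \<le> 1 / y - 1" using yp by (intro ln_le_minus_one) simp
  then have "- ln y \<le> 1 / y - 1" using yp by (simp add: ln_div)
  then have "y * (- ln y) \<le> y * (1 / y - 1)" using yp by (intro mult_left_mono) auto
  also have "\<dots> = 1 - y" using yp by (simp add: field_simps)
  finally show ?thesis using y by simp
qed simp

lemma test_fun:
  assumes s: "0 < s" "s < 1"
  shows "\<exists>\<phi> :: 'a::euclidean_space \<Rightarrow> real. \<phi> \<in> Hs s \<and> \<not> (AE x in lebesgue. \<phi> x = 0) \<and>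
     (\<integral>\<^sup>+ x. ennreal (- ((\<phi> x)^2 * ln ((\<phi> x)^2))) \<partial>lebesgue) < \<infinity>"
proof (intro exI[of _ "tent :: 'a \<Rightarrow> real"] conjI)
  let ?I = "ball (0::'a) 1"
  have fin: "emeasure lebesgue ?I < \<infinity>"
    using emeasure_lborel_ball_finite[of "0::'a" 1] by (simp add: emeasure_completion main_part_sets)
  have sq: "(\<integral>\<^sup>+ x. ennreal ((tent x)^2) \<partial>(lebesgue :: 'a measure)) < \<infinity>"
  proof -
    have "(\<integral>\<^sup>+ x. ennreal ((tent x)^2) \<partial>(lebesgue :: 'a measure)) \<le> (\<integral>\<^sup>+ x. indicator ?I x \<partial>lebesgue)"
    proof (rule nn_integral_mono)
      fix x :: 'a
      show "ennreal ((tent x)^2) \<le> indicator ?I x"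
      proof (cases "x \<in> ?I")
        case True
        have "(tent x)^2 \<le> 1" using tent_props[of x] by (simp add: abs_square_le_1)
        then show ?thesis using True by simp
      next
        case False then show ?thesis using tent_props(3)[of x] by simp
      qed
    qed
    also have "\<dots> = emeasure lebesgue ?I" by simp
    finally show ?thesis using fin by (rule le_less_trans)
  qed
  show "(tent :: 'a \<Rightarrow> real) \<in> Hs s"
  proof -
    have m: "(tent :: 'a \<Rightarrow> real) \<in> borel_measurable lebesgue" by (rule tent_meas)
    have g: "gagliardo s (tent :: 'a \<Rightarrow> real) < \<infinity>" by (rule tent_gag[OF s])
    show ?thesis unfolding Hs_def using m sq g by simp
  qed
  show "\<not> (AE x in (lebesgue :: 'a measure). tent x = (0::real))"
  proof
    assume "AE x in (lebesgue :: 'a measure). tent x = (0::real)"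
    then have "AE x in lebesgue. x \<notin> ?I"
      by eventually_elim (use tent_props(3) in blast)
    then have "emeasure lebesgue ?I = 0"
      by (subst AE_iff_measurable[symmetric, where P = "\<lambda>x. x \<notin> ?I"]) auto
    moreover have "emeasure lebesgue ?I > 0"
      using emeasure_lebesgue_ball[of 1 "0::'a"] by simp
    ultimately show False by simp
  qed
  show "(\<integral>\<^sup>+ x. ennreal (- ((tent x)^2 * ln ((tent x)^2))) \<partial>(lebesgue :: 'a measure)) < \<infinity>"
  proof -
    have "(\<integral>\<^sup>+ x. ennreal (- ((tent x)^2 * ln ((tent x)^2))) \<partial>(lebesgue :: 'a measure)) \<le> (\<integral>\<^sup>+ x. indicator ?I x \<partial>lebesgue)"
    proof (rule nn_integral_mono)
      fix x :: 'a
      show "ennreal (- ((tent x)^2 * ln ((tent x)^2))) \<le> indicator ?I x"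
      proof (cases "x \<in> ?I")
        case True
        have "(tent x)^2 \<le> 1" using tent_props[of x] by (simp add: abs_square_le_1)
        then have "- ((tent x)^2 * ln ((tent x)^2)) \<le> 1" by (intro neg_xlogx) auto
        then show ?thesis using True by simp
      next
        case False then show ?thesis using tent_props(3)[of x] by simp
      qed
    qed
    also have "\<dots> = emeasure lebesgue ?I" by simp
    finally show ?thesis using fin by (rule le_less_trans)
  qed
qed

theorem proposition3p1:
  fixes s :: real
  assumes "0 < s" and "s < 1"
  shows "(\<forall>lam > -1. 0 < Clev TYPE('a::euclidean_space) s lam \<and> Clev TYPE('a) s lam < \<infinity>)
       \<and> continuous_on {-1<..} (\<lambda>lam. real_of_ereal (Clev TYPE('a::euclidean_space) s lam))
       \<and> strict_mono_on {-1<..} (Clev TYPE('a::euclidean_space) s)"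
proof -
  define Phi where "Phi = {\<phi> \<in> (Hs s :: ('a \<Rightarrow> real) set). \<not> (AE x in lebesgue. \<phi> x = 0)}"
  define Sv where "Sv lam \<phi> = (SUP t\<in>{0<..}. Lfun s lam (\<lambda>x. t * \<phi> x))" for lam and \<phi> :: "'a \<Rightarrow> real"
  have Cl: "Clev TYPE('a) s lam = (INF \<phi>\<in>Phi. Sv lam \<phi>)" for lam
    unfolding Clev_def Phi_def Sv_def ..
  obtain \<phi>0 :: "'a \<Rightarrow> real" where p0: "\<phi>0 \<in> Hs s" "\<not> (AE x in lebesgue. \<phi>0 x = 0)"
    "(\<integral>\<^sup>+ x. ennreal (- ((\<phi>0 x)^2 * ln ((\<phi>0 x)^2))) \<partial>lebesgue) < \<infinity>"
    using test_fun[OF assms] by blast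
  have p0P: "\<phi>0 \<in> Phi" using p0 by (simp add: Phi_def)
  then have ne: "Phi \<noteq> {}" by blast
  have scale: "Clev TYPE('a) s lam = ereal (exp lam) * Clev TYPE('a) s 0" for lam
  proof -
    have "Clev TYPE('a) s lam = (INF \<phi>\<in>Phi. ereal (exp lam) * Sv 0 \<phi>)"
      unfolding Cl by (rule INF_cong) (auto simp: Phi_def Sv_def intro: Sv_scale[OF assms(1)])
    also have "\<dots> = ereal (exp lam) * (INF \<phi>\<in>Phi. Sv 0 \<phi>)"
      by (rule INF_ereal_mult_left[symmetric]) (use ne in auto)
    finally show ?thesis by (simp add: Cl)
  qed
  have lo: "ereal (exp (- KK s DIM('a)) / 2) \<le> Clev TYPE('a) s 0"
    unfolding Cl by (rule INF_greatest) (auto simp: Phi_def Sv_def intro: Sv_lower[OF assms(1)])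
  have up: "Clev TYPE('a) s 0 < \<infinity>"
  proof -
    have "Clev TYPE('a) s 0 \<le> Sv 0 \<phi>0" unfolding Cl using p0P by (rule INF_lower)
    also have "Sv 0 \<phi>0 < \<infinity>" unfolding Sv_def using Sv_finite[OF assms(1) p0] .
    finally show ?thesis .
  qed
  obtain c where c: "Clev TYPE('a) s 0 = ereal c" "c > 0"
  proof -
    have "0 < ereal (exp (- KK s DIM('a)) / 2)" by simp
    with lo have pos: "0 < Clev TYPE('a) s 0" by (metis less_le_trans)
    with up show ?thesis using that by (cases "Clev TYPE('a) s 0") auto
  qed
  have Cf: "Clev TYPE('a) s lam = ereal (exp lam * c)" for lam
    using scale[of lam] c by simp
  show ?thesis
  proof (intro conjI allI impI)
    fix lam :: real
    show "0 < Clev TYPE('a) s lam" using c by (simp add: Cf)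
    show "Clev TYPE('a) s lam < \<infinity>" by (simp add: Cf)
  next
    have "continuous_on {-1<..} (\<lambda>lam::real. exp lam * c)" by (intro continuous_intros)
    then show "continuous_on {-1<..} (\<lambda>lam. real_of_ereal (Clev TYPE('a) s lam))"
      by (simp add: Cf)
  next
    show "strict_mono_on {-1<..} (Clev TYPE('a) s)"
      by (rule strict_mono_onI) (use c in \<open>simp add: Cf\<close>)
  qed
qed

end
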